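(* Let $A$ be a Banach algebra with a left approximate identity and suppose there exists $\phi\in\Delta(A)$. Then the triangular Banach algebra $T=\begin{pmatrix}A&A\\0&A\end{pmatrix}$ is not approximately biprojective.
   Context: $\Delta(A)$ is the set of nonzero multiplicative linear functionals on $A$. $T$ consists of matrices $\begin{pmatrix}a&x\\0&b\end{pmatrix}$ with $a,x,b\in A$, with matrix operations and norm $\|a\|+\|x\|+\|b\|$. A Banach algebra $B$ is approximately biprojective if there is a net $(\rho_\alpha)$ of continuous $B$-bimodule morphisms $B\to B\otimes_pB$ with $\pi_B\circ\rho_\alpha(b)\to b$ for all $b\in B$, where $\pi_B(b\otimes c)=bc$. *)

theory Defs
  imports "HOL-Analysis.Analysis"
begin

text \<open>Isabelle/HOL has no class of complex normed vector spaces.  A complex Banach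
algebra is modelled as a type of class real_normed_algebra and banach together with a
complex scalar multiplication cs extending the real one and compatible with product
and norm.\<close>

definition complex_scal :: "(complex \<Rightarrow> 'a::{real_normed_algebra,banach} \<Rightarrow> 'a) \<Rightarrow> bool" where
  "complex_scal cs \<longleftrightarrow>
     (\<forall>r x. cs (complex_of_real r) x = scaleR r x) \<and>
     (\<forall>c x y. cs c (x + y) = cs c x + cs c y) \<and>
     (\<forall>c d x. cs (c + d) x = cs c x + cs d x) \<and>
     (\<forall>c d x. cs c (cs d x) = cs (c * d) x) \<and>
     (\<forall>x. cs 1 x = x) \<and>
     (\<forall>c x y. cs c (x * y) = cs c x * y) \<and>
     (\<forall>c x y. cs c (x * y) = x * cs c y) \<and>
     (\<forall>c x. norm (cs c x) = cmod c * norm x)"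

text \<open>Left approximate identity: a net (e_i) with e_i a \<rightarrow> a for all a.
A net is represented by a proper filter on A (the image filter of the net).\<close>

definition has_left_approx_identity :: "'a::real_normed_algebra itself \<Rightarrow> bool" where
  "has_left_approx_identity _ \<longleftrightarrow>
     (\<exists>F::'a filter. F \<noteq> bot \<and> (\<forall>a::'a. ((\<lambda>e. e * a) \<longlongrightarrow> a) F))"

definition character_space :: "(complex \<Rightarrow> 'a \<Rightarrow> 'a) \<Rightarrow> ('a::real_normed_algebra \<Rightarrow> complex) set" where
  "character_space cs = {\<phi>.
      (\<forall>x y. \<phi> (x + y) = \<phi> x + \<phi> y) \<and>
      (\<forall>c x. \<phi> (cs c x) = c * \<phi> x) \<and>
      (\<forall>x y. \<phi> (x * y) = \<phi> x * \<phi> y) \<and>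
      (\<exists>x. \<phi> x \<noteq> 0)}"

text \<open>An element (a, x, b) stands for the matrix [[a, x], [0, b]].\<close>

definition tri_scal :: "(complex \<Rightarrow> 'a \<Rightarrow> 'a) \<Rightarrow> complex \<Rightarrow> 'a \<times> 'a \<times> 'a \<Rightarrow> 'a \<times> 'a \<times> 'a" where
  "tri_scal cs c t = (case t of (a, x, b) \<Rightarrow> (cs c a, cs c x, cs c b))"

definition tri_mult :: "'a::real_normed_algebra \<times> 'a \<times> 'a \<Rightarrow> 'a \<times> 'a \<times> 'a \<Rightarrow> 'a \<times> 'a \<times> 'a" where
  "tri_mult s t = (case s of (a, x, b) \<Rightarrow> case t of (a', x', b') \<Rightarrow>
      (a * a', a * x' + x * b', b * b'))"

definition tri_norm :: "'a::real_normed_algebra \<times> 'a \<times> 'a \<Rightarrow> real" where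
  "tri_norm t = (case t of (a, x, b) \<Rightarrow> norm a + norm x + norm b)"

text \<open>Every element of the completed
projective tensor product is an absolutely convergent series \<Sum> x_n \<otimes> y_n with
\<Sum> ||x_n|| ||y_n|| < \<infinity>; two such series represent the same element iff every bounded
bilinear functional takes the same value on them (the dual of B \<otimes>_p B is the space of
bounded bilinear forms, Hahn-Banach).  Elements are thus represented by sequences
u :: nat \<Rightarrow> 'b \<times> 'b.\<close>

definition tensor_rep :: "('b \<Rightarrow> real) \<Rightarrow> (nat \<Rightarrow> 'b \<times> 'b) \<Rightarrow> bool" where
  "tensor_rep nrm u \<longleftrightarrow> summable (\<lambda>n. nrm (fst (u n)) * nrm (snd (u n)))"

definition bounded_bilinear_functional ::
  "(complex \<Rightarrow> 'b::ab_group_add \<Rightarrow> 'b) \<Rightarrow> ('b \<Rightarrow> real) \<Rightarrow> ('b \<Rightarrow> 'b \<Rightarrow> complex) \<Rightarrow> bool" where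
  "bounded_bilinear_functional scal nrm G \<longleftrightarrow>
     (\<forall>x x' y. G (x + x') y = G x y + G x' y) \<and>
     (\<forall>x y y'. G x (y + y') = G x y + G x y') \<and>
     (\<forall>c x y. G (scal c x) y = c * G x y) \<and>
     (\<forall>c x y. G x (scal c y) = c * G x y) \<and>
     (\<exists>K. \<forall>x y. cmod (G x y) \<le> K * nrm x * nrm y)"

definition tensor_eq ::
  "(complex \<Rightarrow> 'b::ab_group_add \<Rightarrow> 'b) \<Rightarrow> ('b \<Rightarrow> real) \<Rightarrow> (nat \<Rightarrow> 'b \<times> 'b) \<Rightarrow> (nat \<Rightarrow> 'b \<times> 'b) \<Rightarrow> bool" where
  "tensor_eq scal nrm u v \<longleftrightarrow>
     (\<forall>G. bounded_bilinear_functional scal nrm G \<longrightarrow>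
        (\<Sum>n. G (fst (u n)) (snd (u n))) = (\<Sum>n. G (fst (v n)) (snd (v n))))"

definition tensor_norm ::
  "(complex \<Rightarrow> 'b::ab_group_add \<Rightarrow> 'b) \<Rightarrow> ('b \<Rightarrow> real) \<Rightarrow> (nat \<Rightarrow> 'b \<times> 'b) \<Rightarrow> real" where
  "tensor_norm scal nrm u =
     Inf {(\<Sum>n. nrm (fst (v n)) * nrm (snd (v n))) | v. tensor_rep nrm v \<and> tensor_eq scal nrm u v}"

definition tensor_add :: "(nat \<Rightarrow> 'b \<times> 'b) \<Rightarrow> (nat \<Rightarrow> 'b \<times> 'b) \<Rightarrow> nat \<Rightarrow> 'b \<times> 'b" where
  "tensor_add u v = (\<lambda>n. if even n then u (n div 2) else v (n div 2))"

definition tensor_scal :: "(complex \<Rightarrow> 'b \<Rightarrow> 'b) \<Rightarrow> complex \<Rightarrow> (nat \<Rightarrow> 'b \<times> 'b) \<Rightarrow> nat \<Rightarrow> 'b \<times> 'b" where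
  "tensor_scal scal c u = (\<lambda>n. (scal c (fst (u n)), snd (u n)))"

definition tensor_lmult :: "('b \<Rightarrow> 'b \<Rightarrow> 'b) \<Rightarrow> 'b \<Rightarrow> (nat \<Rightarrow> 'b \<times> 'b) \<Rightarrow> nat \<Rightarrow> 'b \<times> 'b" where
  "tensor_lmult mul a u = (\<lambda>n. (mul a (fst (u n)), snd (u n)))"

definition tensor_rmult :: "('b \<Rightarrow> 'b \<Rightarrow> 'b) \<Rightarrow> (nat \<Rightarrow> 'b \<times> 'b) \<Rightarrow> 'b \<Rightarrow> nat \<Rightarrow> 'b \<times> 'b" where
  "tensor_rmult mul u a = (\<lambda>n. (fst (u n), mul (snd (u n)) a))"

definition tensor_pi :: "('b::ab_group_add \<Rightarrow> 'b \<Rightarrow> 'b) \<Rightarrow> ('b \<Rightarrow> real) \<Rightarrow> (nat \<Rightarrow> 'b \<times> 'b) \<Rightarrow> 'b" where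
  "tensor_pi mul nrm u =
     (THE z. ((\<lambda>N. nrm ((\<Sum>n<N. mul (fst (u n)) (snd (u n))) - z)) \<longlongrightarrow> 0) sequentially)"

definition bimodule_morphism ::
  "(complex \<Rightarrow> 'b::ab_group_add \<Rightarrow> 'b) \<Rightarrow> ('b \<Rightarrow> 'b \<Rightarrow> 'b) \<Rightarrow> ('b \<Rightarrow> real)
     \<Rightarrow> ('b \<Rightarrow> nat \<Rightarrow> 'b \<times> 'b) \<Rightarrow> bool" where
  "bimodule_morphism scal mul nrm \<rho> \<longleftrightarrow>
     (\<forall>b. tensor_rep nrm (\<rho> b)) \<and>
     (\<forall>c b b'. tensor_eq scal nrm (\<rho> (scal c b + b')) (tensor_add (tensor_scal scal c (\<rho> b)) (\<rho> b'))) \<and>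
     (\<exists>C. \<forall>b. tensor_norm scal nrm (\<rho> b) \<le> C * nrm b) \<and>
     (\<forall>a b. tensor_eq scal nrm (\<rho> (mul a b)) (tensor_lmult mul a (\<rho> b))) \<and>
     (\<forall>a b. tensor_eq scal nrm (\<rho> (mul b a)) (tensor_rmult mul (\<rho> b) a))"

text \<open>The net is represented by a proper filter on the
space of maps (its image filter), eventually consisting of bimodule morphisms.\<close>

definition approx_biprojective ::
  "(complex \<Rightarrow> 'b::ab_group_add \<Rightarrow> 'b) \<Rightarrow> ('b \<Rightarrow> 'b \<Rightarrow> 'b) \<Rightarrow> ('b \<Rightarrow> real) \<Rightarrow> bool" where
  "approx_biprojective scal mul nrm \<longleftrightarrow>
     (\<exists>F::('b \<Rightarrow> nat \<Rightarrow> 'b \<times> 'b) filter. F \<noteq> bot \<and>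
        eventually (bimodule_morphism scal mul nrm) F \<and>
        (\<forall>b. ((\<lambda>\<rho>. nrm (tensor_pi mul nrm (\<rho> b) - b)) \<longlongrightarrow> 0) F))"

end

theory Submission
  imports Defs
begin

lemma interleave_sums:
  fixes a b :: "nat \<Rightarrow> 'c::real_normed_vector"
  assumes "summable a" "summable b"
  shows "(\<lambda>n. if even n then a (n div 2) else b (n div 2)) sums (suminf a + suminf b)"
proof -
  let ?A = "\<lambda>n. if even n then a (n div 2) else 0"
  let ?B = "\<lambda>n. if even n then 0 else b (n div 2)"
  have "(\<lambda>n. ?A (2*n)) sums suminf a" using assms(1) by (simp add: summable_sums)
  hence A: "?A sums suminf a"
    by (subst (asm) sums_mono_reindex[of "\<lambda>n. 2 * n"]) (auto simp: strict_mono_def elim!: oddE)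
  have "(\<lambda>n. ?B (2*n+1)) sums suminf b" using assms(2) by (simp add: summable_sums)
  hence B: "?B sums suminf b"
    by (subst (asm) sums_mono_reindex[of "\<lambda>n. 2 * n + 1"]) (auto simp: strict_mono_def image_iff elim!: oddE)
  have "(\<lambda>n. ?A n + ?B n) sums (suminf a + suminf b)" using sums_add[OF A B] .
  moreover have "(\<lambda>n. ?A n + ?B n) = (\<lambda>n. if even n then a (n div 2) else b (n div 2))" by auto
  ultimately show ?thesis by simp
qed

definition gsum :: "('b \<Rightarrow> 'b \<Rightarrow> complex) \<Rightarrow> (nat \<Rightarrow> 'b \<times> 'b) \<Rightarrow> complex" where
  "gsum G u = (\<Sum>n. G (fst (u n)) (snd (u n)))"

lemma bbf_K:
  assumes "bounded_bilinear_functional scal nrm G" "\<And>x. nrm x \<ge> 0"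
  obtains K where "K > 0" "\<And>x y. cmod (G x y) \<le> K * nrm x * nrm y"
proof -
  obtain K where K: "\<And>x y. cmod (G x y) \<le> K * nrm x * nrm y"
    using assms(1) unfolding bounded_bilinear_functional_def by blast
  have "cmod (G x y) \<le> (\<bar>K\<bar> + 1) * nrm x * nrm y" for x y
  proof -
    have "K * nrm x * nrm y \<le> (\<bar>K\<bar> + 1) * nrm x * nrm y"
      using assms(2)[of x] assms(2)[of y]
      by (intro mult_right_mono) auto
    thus ?thesis using K[of x y] by linarith
  qed
  thus ?thesis using that[of "\<bar>K\<bar> + 1"] by auto
qed

lemma bbf_summable:
  assumes "bounded_bilinear_functional scal nrm G" "\<And>x. nrm x \<ge> 0" "tensor_rep nrm v"
  shows "summable (\<lambda>n. cmod (G (fst (v n)) (snd (v n))))"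
    "summable (\<lambda>n. G (fst (v n)) (snd (v n)))"
proof -
  obtain K where K: "K > 0" "\<And>x y. cmod (G x y) \<le> K * nrm x * nrm y"
    using bbf_K[OF assms(1,2)] by blast
  have s: "summable (\<lambda>n. K * (nrm (fst (v n)) * nrm (snd (v n))))"
    using assms(3) unfolding tensor_rep_def by (rule summable_mult)
  show "summable (\<lambda>n. cmod (G (fst (v n)) (snd (v n))))"
    by (rule summable_comparison_test[OF _ s]) (use K in \<open>auto simp: mult.assoc\<close>)
  thus "summable (\<lambda>n. G (fst (v n)) (snd (v n)))" by (rule summable_norm_cancel)
qed

lemma bbf_gsum_bound:
  assumes "bounded_bilinear_functional scal nrm G" "\<And>x. nrm x \<ge> 0" "tensor_rep nrm v"
    "K > 0" "\<And>x y. cmod (G x y) \<le> K * nrm x * nrm y"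
  shows "cmod (gsum G v) \<le> K * (\<Sum>n. nrm (fst (v n)) * nrm (snd (v n)))"
proof -
  have s: "summable (\<lambda>n. nrm (fst (v n)) * nrm (snd (v n)))"
    using assms(3) unfolding tensor_rep_def .
  have "cmod (gsum G v) \<le> (\<Sum>n. cmod (G (fst (v n)) (snd (v n))))"
    unfolding gsum_def by (rule summable_norm[OF bbf_summable(1)[OF assms(1-3)]])
  also have "\<dots> \<le> (\<Sum>n. K * (nrm (fst (v n)) * nrm (snd (v n))))"
    by (rule suminf_le) (use assms s in \<open>auto simp: mult.assoc intro: bbf_summable summable_mult[OF s]\<close>)
  also have "\<dots> = K * (\<Sum>n. nrm (fst (v n)) * nrm (snd (v n)))"
    by (rule suminf_mult[OF s])
  finally show ?thesis .
qed

lemma morph_bound: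
  assumes "bounded_bilinear_functional scal nrm G" "\<And>x. nrm x \<ge> 0"
    "bimodule_morphism scal mul nrm \<rho>"
  shows "\<exists>M. \<forall>u. cmod (gsum G (\<rho> u)) \<le> M * nrm u"
proof -
  obtain K where K: "K > 0" "\<And>x y. cmod (G x y) \<le> K * nrm x * nrm y"
    using bbf_K[OF assms(1,2)] by blast
  obtain C where C: "\<And>b. tensor_norm scal nrm (\<rho> b) \<le> C * nrm b"
    using assms(3) unfolding bimodule_morphism_def by blast
  have rep: "\<And>b. tensor_rep nrm (\<rho> b)" using assms(3) unfolding bimodule_morphism_def by blast
  have "cmod (gsum G (\<rho> u)) \<le> (K * C) * nrm u" for u
  proof -
    let ?S = "{(\<Sum>n. nrm (fst (v n)) * nrm (snd (v n))) | v. tensor_rep nrm v \<and> tensor_eq scal nrm (\<rho> u) v}"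
    have ne: "?S \<noteq> {}" using rep[of u] unfolding tensor_eq_def by blast
    have "cmod (gsum G (\<rho> u)) / K \<le> Inf ?S"
    proof (rule cInf_greatest[OF ne])
      fix x assume "x \<in> ?S"
      then obtain v where v: "x = (\<Sum>n. nrm (fst (v n)) * nrm (snd (v n)))" "tensor_rep nrm v"
        "tensor_eq scal nrm (\<rho> u) v" by blast
      have "gsum G (\<rho> u) = gsum G v" using v(3) assms(1) unfolding tensor_eq_def gsum_def by blast
      hence "cmod (gsum G (\<rho> u)) \<le> K * x" using bbf_gsum_bound[OF assms(1,2) v(2) K] v(1) by simp
      thus "cmod (gsum G (\<rho> u)) / K \<le> x" using K(1) by (simp add: divide_simps mult.commute)
    qed
    hence "cmod (gsum G (\<rho> u)) / K \<le> C * nrm u" using C[of u] unfolding tensor_norm_def by linarith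
    thus ?thesis using K(1) by (simp add: divide_simps mult.commute mult.left_commute)
  qed
  thus ?thesis by blast
qed

lemma morph_diff:
  assumes "bounded_bilinear_functional scal nrm G" "\<And>x. nrm x \<ge> 0"
    "bimodule_morphism scal mul nrm \<rho>" "\<And>x. scal (-1) x = - x"
  shows "gsum G (\<rho> (u - v)) = gsum G (\<rho> u) - gsum G (\<rho> v)"
proof -
  have rep: "\<And>b. tensor_rep nrm (\<rho> b)" using assms(3) unfolding bimodule_morphism_def by blast
  have eq: "tensor_eq scal nrm (\<rho> (scal (-1) v + u)) (tensor_add (tensor_scal scal (-1) (\<rho> v)) (\<rho> u))"
    using assms(3) unfolding bimodule_morphism_def by blast
  have "scal (-1) v + u = u - v" using assms(4) by simp
  hence 1: "gsum G (\<rho> (u - v)) = gsum G (tensor_add (tensor_scal scal (-1) (\<rho> v)) (\<rho> u))"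
    using eq assms(1) unfolding tensor_eq_def gsum_def by metis
  have sv: "summable (\<lambda>n. G (fst (\<rho> v n)) (snd (\<rho> v n)))" and su: "summable (\<lambda>n. G (fst (\<rho> u n)) (snd (\<rho> u n)))"
    using bbf_summable(2)[OF assms(1,2) rep] by auto
  have sc: "G (scal (-1) x) y = - G x y" for x y using assms(1) unfolding bounded_bilinear_functional_def by simp
  have sv': "summable (\<lambda>n. - G (fst (\<rho> v n)) (snd (\<rho> v n)))" using summable_minus[OF sv] .
  have "(\<lambda>n. G (fst (tensor_add (tensor_scal scal (-1) (\<rho> v)) (\<rho> u) n)) (snd (tensor_add (tensor_scal scal (-1) (\<rho> v)) (\<rho> u) n)))
     = (\<lambda>n. if even n then (\<lambda>n. - G (fst (\<rho> v n)) (snd (\<rho> v n))) (n div 2) else (\<lambda>n. G (fst (\<rho> u n)) (snd (\<rho> u n))) (n div 2))"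
    by (auto simp: tensor_add_def tensor_scal_def sc)
  hence "gsum G (tensor_add (tensor_scal scal (-1) (\<rho> v)) (\<rho> u)) = (\<Sum>n. - G (fst (\<rho> v n)) (snd (\<rho> v n))) + gsum G (\<rho> u)"
    using interleave_sums[OF sv' su] unfolding gsum_def by (simp add: sums_iff)
  also have "\<dots> = gsum G (\<rho> u) - gsum G (\<rho> v)" unfolding gsum_def using suminf_minus[OF sv] by simp
  finally show ?thesis using 1 by simp
qed


lemma cs_props:
  assumes "complex_scal cs"
  shows "\<And>x. cs (-1) x = - x" "\<And>c x. norm (cs c x) = cmod c * norm x"
  using assms unfolding complex_scal_def
  by (metis of_real_1 of_real_minus scaleR_minus1_left, blast)

lemma char_props:
  assumes "\<phi> \<in> character_space cs"
  shows "\<And>x y. \<phi> (x + y) = \<phi> x + \<phi> y" "\<And>c x. \<phi> (cs c x) = c * \<phi> x"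
    "\<And>x y. \<phi> (x * y) = \<phi> x * \<phi> y" "\<phi> 0 = 0" "\<And>x y. \<phi> (x - y) = \<phi> x - \<phi> y"
    "\<And>x. \<phi> (- x) = - \<phi> x"
proof -
  show a: "\<And>x y. \<phi> (x + y) = \<phi> x + \<phi> y" using assms unfolding character_space_def by blast
  show "\<And>c x. \<phi> (cs c x) = c * \<phi> x" "\<And>x y. \<phi> (x * y) = \<phi> x * \<phi> y"
    using assms unfolding character_space_def by blast+
  show z: "\<phi> 0 = 0" using a[of 0 0] by simp
  show n: "\<And>x. \<phi> (- x) = - \<phi> x" using a z by (metis add.right_inverse add_eq_0_iff2)
  show "\<And>x y. \<phi> (x - y) = \<phi> x - \<phi> y" using a n by (metis diff_conv_add_uminus)
qed

lemma char_bound: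
  fixes cs :: "complex \<Rightarrow> 'a::{real_normed_algebra,banach} \<Rightarrow> 'a"
  assumes cs: "complex_scal cs" and ph: "\<phi> \<in> character_space cs"
  shows "cmod (\<phi> x) \<le> norm x"
proof (rule ccontr)
  assume "\<not> cmod (\<phi> x) \<le> norm x"
  hence lt: "norm x < cmod (\<phi> x)" by simp
  hence nz: "\<phi> x \<noteq> 0" by auto
  define x1 where "x1 = cs (inverse (\<phi> x)) x"
  have p1: "\<phi> x1 = 1" using nz char_props(2)[OF ph] unfolding x1_def by simp
  have n1: "norm x1 < 1"
  proof -
    have "norm x1 = norm x / cmod (\<phi> x)" using cs_props(2)[OF cs] unfolding x1_def
      by (simp add: norm_inverse divide_inverse mult.commute)
    thus ?thesis using lt nz by simp
  qed
  define p where "p n = ((\<lambda>t. x1 * t) ^^ n) x1" for n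
  have pS: "p (Suc n) = x1 * p n" for n unfolding p_def by simp
  have pb: "norm (p n) \<le> norm x1 ^ Suc n" for n
  proof (induction n)
    case 0 then show ?case by (simp add: p_def)
  next
    case (Suc n)
    have "norm (p (Suc n)) \<le> norm x1 * norm (p n)" unfolding pS by (rule norm_mult_ineq)
    also have "\<dots> \<le> norm x1 * norm x1 ^ Suc n" using Suc by (simp add: mult_left_mono)
    finally show ?case by simp
  qed
  have "summable (\<lambda>n. norm x1 * norm x1 ^ n)"
    by (rule summable_mult, rule summable_geometric) (use n1 in auto)
  hence "summable (\<lambda>n. norm (p n))"
    by (rule summable_comparison_test[rotated]) (use pb in auto)
  hence sp: "summable p" by (rule summable_norm_cancel)
  define y where "y = suminf p"
  have "x1 * y = (\<Sum>n. x1 * p n)" unfolding y_def by (rule suminf_mult[OF sp, symmetric])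
  also have "\<dots> = (\<Sum>n. p (Suc n))" by (simp add: pS)
  also have "\<dots> = y - x1" using suminf_split_head[OF sp] unfolding y_def by (simp add: p_def)
  finally have "y = x1 + x1 * y" by (simp add: algebra_simps)
  hence "\<phi> y = \<phi> (x1 + x1 * y)" by (rule arg_cong)
  hence "\<phi> y = 1 + \<phi> y" using char_props(1,3)[OF ph] p1 by (simp only:) simp
  thus False by simp
qed


definition Gone :: "('a \<Rightarrow> complex) \<Rightarrow> 'a \<times> 'a \<times> 'a \<Rightarrow> 'a \<times> 'a \<times> 'a \<Rightarrow> complex" where
  "Gone \<phi> s t = \<phi> (fst s) * \<phi> (fst (snd t))"
definition Gtwo :: "('a \<Rightarrow> complex) \<Rightarrow> 'a \<times> 'a \<times> 'a \<Rightarrow> 'a \<times> 'a \<times> 'a \<Rightarrow> complex" where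
  "Gtwo \<phi> s t = \<phi> (fst (snd s)) * \<phi> (snd (snd t))"

lemma tri_norm_nonneg: "tri_norm t \<ge> 0"
  by (cases t) (auto simp: tri_norm_def)

lemma tri_norm_comp: "norm (fst t) \<le> tri_norm t" "norm (fst (snd t)) \<le> tri_norm t" "norm (snd (snd t)) \<le> tri_norm t"
  by (cases t, auto simp: tri_norm_def)+

lemma bbf_Gs:
  fixes cs :: "complex \<Rightarrow> 'a::{real_normed_algebra,banach} \<Rightarrow> 'a"
  assumes cs: "complex_scal cs" and ph: "\<phi> \<in> character_space cs"
  shows "bounded_bilinear_functional (tri_scal cs) tri_norm (Gone \<phi>)"
    "bounded_bilinear_functional (tri_scal cs) tri_norm (Gtwo \<phi>)"
proof -
  note P = char_props[OF ph]
  have bd: "cmod (\<phi> a) * cmod (\<phi> b) \<le> 1 * tri_norm s * tri_norm t"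
    if "norm a \<le> tri_norm s" "norm b \<le> tri_norm t" for a b and s t :: "'a \<times> 'a \<times> 'a"
  proof -
    have "cmod (\<phi> a) \<le> tri_norm s" using char_bound[OF cs ph, of a] that by linarith
    moreover have "cmod (\<phi> b) \<le> tri_norm t" using char_bound[OF cs ph, of b] that by linarith
    ultimately show ?thesis by (simp add: mult_mono tri_norm_nonneg)
  qed
  show "bounded_bilinear_functional (tri_scal cs) tri_norm (Gone \<phi>)"
    unfolding bounded_bilinear_functional_def
  proof (intro conjI allI)
    show "\<exists>K. \<forall>x y. cmod (Gone \<phi> x y) \<le> K * tri_norm x * tri_norm y"
      using bd[OF tri_norm_comp(1) tri_norm_comp(2)] by (intro exI[of _ 1]) (auto simp: Gone_def norm_mult)
  qed (auto simp: Gone_def tri_scal_def P split: prod.splits simp: algebra_simps)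
  show "bounded_bilinear_functional (tri_scal cs) tri_norm (Gtwo \<phi>)"
    unfolding bounded_bilinear_functional_def
  proof (intro conjI allI)
    show "\<exists>K. \<forall>x y. cmod (Gtwo \<phi> x y) \<le> K * tri_norm x * tri_norm y"
      using bd[OF tri_norm_comp(2) tri_norm_comp(3)] by (intro exI[of _ 1]) (auto simp: Gtwo_def norm_mult)
  qed (auto simp: Gtwo_def tri_scal_def P split: prod.splits simp: algebra_simps)
qed

lemma fx_tri_mult:
  assumes ph: "\<phi> \<in> character_space cs"
  shows "\<phi> (fst (snd (tri_mult s t))) = Gone \<phi> s t + Gtwo \<phi> s t"
  using char_props[OF ph]
  by (cases s; cases t) (simp add: tri_mult_def Gone_def Gtwo_def)

lemma tri_mult_norm:
  fixes s t :: "'a::real_normed_algebra \<times> 'a \<times> 'a"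
  shows "norm (fst (tri_mult s t)) \<le> tri_norm s * tri_norm t"
    "norm (fst (snd (tri_mult s t))) \<le> tri_norm s * tri_norm t"
    "norm (snd (snd (tri_mult s t))) \<le> tri_norm s * tri_norm t"
proof -
  obtain a x b where s: "s = (a, x, b)" by (cases s)
  obtain a' x' b' where t: "t = (a', x', b')" by (cases t)
  have N: "0 \<le> norm a" "0 \<le> norm x" "0 \<le> norm b" "0 \<le> norm a'" "0 \<le> norm x'" "0 \<le> norm b'" by auto
  have e: "tri_norm s * tri_norm t = norm a * norm a' + norm a * norm x' + norm a * norm b'
     + norm x * norm a' + norm x * norm x' + norm x * norm b' + norm b * norm a' + norm b * norm x' + norm b * norm b'"
    by (simp add: s t tri_norm_def algebra_simps)
  have pos: "0 \<le> u * v" if "0 \<le> u" "0 \<le> v" for u v :: real using that by simp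
  note PP = pos[OF N(1) N(4)] pos[OF N(1) N(5)] pos[OF N(1) N(6)] pos[OF N(2) N(4)] pos[OF N(2) N(5)]
    pos[OF N(2) N(6)] pos[OF N(3) N(4)] pos[OF N(3) N(5)] pos[OF N(3) N(6)]
  have f: "fst (tri_mult s t) = a * a'" "fst (snd (tri_mult s t)) = a * x' + x * b'"
    "snd (snd (tri_mult s t)) = b * b'" by (simp_all add: s t tri_mult_def)
  show "norm (fst (tri_mult s t)) \<le> tri_norm s * tri_norm t"
    using norm_mult_ineq[of a a'] PP unfolding e f by linarith
  show "norm (snd (snd (tri_mult s t))) \<le> tri_norm s * tri_norm t"
    using norm_mult_ineq[of b b'] PP unfolding e f by linarith
  have "norm (a * x' + x * b') \<le> norm a * norm x' + norm x * norm b'"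
    using norm_triangle_ineq[of "a * x'" "x * b'"] norm_mult_ineq[of a x'] norm_mult_ineq[of x b'] by linarith
  thus "norm (fst (snd (tri_mult s t))) \<le> tri_norm s * tri_norm t"
    using PP unfolding e f by linarith
qed


lemma tri_norm_alt: "tri_norm t = norm (fst t) + norm (fst (snd t)) + norm (snd (snd t))"
  by (cases t) (simp add: tri_norm_def)

lemma tri_norm_tri:
  fixes a b c :: "'a::real_normed_algebra \<times> 'a \<times> 'a"
  shows "tri_norm (a - b) \<le> tri_norm (c - a) + tri_norm (c - b)"
proof -
  have h: "norm (x - y) \<le> norm (z - x) + norm (z - y)" for x y z :: 'a
  proof -
    have "x - y = (z - y) - (z - x)" by simp
    hence "norm (x - y) \<le> norm (z - y) + norm (z - x)" using norm_triangle_ineq4 by metis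
    thus ?thesis by simp
  qed
  show ?thesis unfolding tri_norm_alt using h[of "fst a" "fst b" "fst c"] h[of "fst (snd a)" "fst (snd b)" "fst (snd c)"]
    h[of "snd (snd a)" "snd (snd b)" "snd (snd c)"] by simp
qed

lemma tri_norm_zero: "tri_norm (t::'a::real_normed_algebra \<times> 'a \<times> 'a) = 0 \<Longrightarrow> t = 0"
  unfolding tri_norm_alt by (cases t) (simp add: add_nonneg_eq_0_iff zero_prod_def)

lemma char_sum:
  assumes ph: "\<phi> \<in> character_space cs"
  shows "\<phi> (\<Sum>n<(N::nat). f n) = (\<Sum>n<N. \<phi> (f n))"
  by (induction N) (simp_all add: char_props[OF ph])

lemma pi_fx:
  fixes cs :: "complex \<Rightarrow> 'a::{real_normed_algebra,banach} \<Rightarrow> 'a"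
    and u :: "nat \<Rightarrow> ('a \<times> 'a \<times> 'a) \<times> ('a \<times> 'a \<times> 'a)"
  assumes cs: "complex_scal cs" and ph: "\<phi> \<in> character_space cs" and rep: "tensor_rep tri_norm u"
  shows "\<phi> (fst (snd (tensor_pi tri_mult tri_norm u))) = gsum (Gone \<phi>) u + gsum (Gtwo \<phi>) u"
proof -
  define w where "w n = tri_mult (fst (u n)) (snd (u n))" for n
  have sr: "summable (\<lambda>n. tri_norm (fst (u n)) * tri_norm (snd (u n)))" using rep unfolding tensor_rep_def .
  have s1: "summable (\<lambda>n. fst (w n))"
    by (rule summable_norm_cancel, rule summable_comparison_test[OF _ sr]) (auto simp: w_def intro: tri_mult_norm)
  have s2: "summable (\<lambda>n. fst (snd (w n)))"
    by (rule summable_norm_cancel, rule summable_comparison_test[OF _ sr]) (auto simp: w_def intro: tri_mult_norm)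
  have s3: "summable (\<lambda>n. snd (snd (w n)))"
    by (rule summable_norm_cancel, rule summable_comparison_test[OF _ sr]) (auto simp: w_def intro: tri_mult_norm)
  define Z where "Z = ((\<Sum>n. fst (w n)), (\<Sum>n. fst (snd (w n))), (\<Sum>n. snd (snd (w n))))"
  have eqw: "\<And>N. (\<Sum>n<N. tri_mult (fst (u n)) (snd (u n))) = (\<Sum>n<N. w n)" by (simp add: w_def)
  have conv: "((\<lambda>N. tri_norm ((\<Sum>n<N. w n) - Z)) \<longlongrightarrow> 0) sequentially"
  proof -
    have L: "((\<lambda>N. norm ((\<Sum>n<N. f n) - suminf f)) \<longlongrightarrow> 0) sequentially" if "summable f" for f :: "nat \<Rightarrow> 'a"
      by (rule tendsto_norm_zero, rule LIM_zero, rule summable_LIMSEQ[OF that])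
    have "((\<lambda>N. norm ((\<Sum>n<N. fst (w n)) - fst Z) + norm ((\<Sum>n<N. fst (snd (w n))) - fst (snd Z))
        + norm ((\<Sum>n<N. snd (snd (w n))) - snd (snd Z))) \<longlongrightarrow> 0 + 0 + 0) sequentially"
      unfolding Z_def using L[OF s1] L[OF s2] L[OF s3] by (intro tendsto_add) auto
    thus ?thesis unfolding tri_norm_alt by (simp add: fst_sum snd_sum)
  qed
  have piZ: "tensor_pi tri_mult tri_norm u = Z"
    unfolding tensor_pi_def eqw
  proof (rule the_equality)
    show "((\<lambda>N. tri_norm ((\<Sum>n<N. w n) - Z)) \<longlongrightarrow> 0) sequentially" by (rule conv)
  next
    fix z assume z: "((\<lambda>N. tri_norm ((\<Sum>n<N. w n) - z)) \<longlongrightarrow> 0) sequentially"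
    have "((\<lambda>N. tri_norm ((\<Sum>n<N. w n) - z) + tri_norm ((\<Sum>n<N. w n) - Z)) \<longlongrightarrow> 0 + 0) sequentially"
      by (intro tendsto_add z conv)
    hence lim0: "((\<lambda>N. tri_norm ((\<Sum>n<N. w n) - z) + tri_norm ((\<Sum>n<N. w n) - Z)) \<longlongrightarrow> 0) sequentially" by simp
    have "tri_norm (z - Z) \<le> 0"
      by (rule tendsto_le[OF trivial_limit_sequentially lim0 tendsto_const]) (simp add: always_eventually tri_norm_tri)
    hence "tri_norm (z - Z) = 0" using tri_norm_nonneg[of "z - Z"] by linarith
    thus "z = Z" using tri_norm_zero by fastforce
  qed
  have lip: "cmod (\<phi> a - \<phi> b) \<le> norm (a - b)" for a b
    using char_bound[OF cs ph, of "a - b"] char_props(5)[OF ph] by simp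
  have L2: "((\<lambda>N. norm ((\<Sum>n<N. fst (snd (w n))) - (\<Sum>n. fst (snd (w n))))) \<longlongrightarrow> 0) sequentially"
    by (rule tendsto_norm_zero, rule LIM_zero, rule summable_LIMSEQ[OF s2])
  have "((\<lambda>N. \<phi> (\<Sum>n<N. fst (snd (w n))) - \<phi> (\<Sum>n. fst (snd (w n)))) \<longlongrightarrow> 0) sequentially"
    by (rule Lim_null_comparison[OF _ L2]) (simp add: always_eventually lip)
  hence "((\<lambda>N. \<phi> (\<Sum>n<N. fst (snd (w n)))) \<longlongrightarrow> \<phi> (\<Sum>n. fst (snd (w n)))) sequentially"
    by (rule LIM_zero_cancel)
  hence "(\<lambda>n. \<phi> (fst (snd (w n)))) sums \<phi> (\<Sum>n. fst (snd (w n)))"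
    unfolding sums_def by (simp add: char_sum[OF ph])
  moreover have "(\<lambda>n. \<phi> (fst (snd (w n)))) = (\<lambda>n. Gone \<phi> (fst (u n)) (snd (u n)) + Gtwo \<phi> (fst (u n)) (snd (u n)))"
    by (simp add: w_def fx_tri_mult[OF ph])
  moreover have "(\<lambda>n. Gone \<phi> (fst (u n)) (snd (u n)) + Gtwo \<phi> (fst (u n)) (snd (u n))) sums (gsum (Gone \<phi>) u + gsum (Gtwo \<phi>) u)"
    unfolding gsum_def
    by (intro sums_add summable_sums bbf_summable(2)[OF bbf_Gs(1)[OF cs ph] tri_norm_nonneg rep]
          bbf_summable(2)[OF bbf_Gs(2)[OF cs ph] tri_norm_nonneg rep])
  ultimately have "\<phi> (\<Sum>n. fst (snd (w n))) = gsum (Gone \<phi>) u + gsum (Gtwo \<phi>) u"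
    by (metis sums_unique2)
  thus ?thesis unfolding piZ Z_def by simp
qed


lemma gsum_zero_approx:
  fixes cs :: "complex \<Rightarrow> 'a::{real_normed_algebra,banach} \<Rightarrow> 'a"
  assumes cs: "complex_scal cs"
    and G: "bounded_bilinear_functional (tri_scal cs) tri_norm G"
    and rho: "bimodule_morphism (tri_scal cs) (tri_mult :: 'a \<times> 'a \<times> 'a \<Rightarrow> _) tri_norm \<rho>"
    and app: "\<And>\<epsilon>. \<epsilon> > 0 \<Longrightarrow> \<exists>z'. tri_norm (z - z') < \<epsilon> \<and> gsum G (\<rho> z') = 0"
  shows "gsum G (\<rho> z) = 0"
proof -
  have neg: "tri_scal cs (-1) x = - x" for x :: "'a \<times> 'a \<times> 'a"
    using cs_props(1)[OF cs] by (cases x) (simp add: tri_scal_def)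
  obtain M where M: "\<And>u. cmod (gsum G (\<rho> u)) \<le> M * tri_norm u"
    using morph_bound[OF G tri_norm_nonneg rho] by blast
  have "cmod (gsum G (\<rho> z)) \<le> 0 + \<epsilon>" if e: "\<epsilon> > 0" for \<epsilon>
  proof -
    have "\<epsilon> / (\<bar>M\<bar> + 1) > 0" using e by simp
    then obtain z' where z': "tri_norm (z - z') < \<epsilon> / (\<bar>M\<bar> + 1)" "gsum G (\<rho> z') = 0" using app by blast
    have "gsum G (\<rho> (z - z')) = gsum G (\<rho> z) - gsum G (\<rho> z')"
      by (rule morph_diff[OF G tri_norm_nonneg rho neg])
    hence eq: "gsum G (\<rho> z) = gsum G (\<rho> (z - z'))" using z'(2) by simp
    have "cmod (gsum G (\<rho> z)) \<le> M * tri_norm (z - z')" unfolding eq by (rule M)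
    also have "\<dots> \<le> \<bar>M\<bar> * tri_norm (z - z')" using tri_norm_nonneg[of "z - z'"]
      by (intro mult_right_mono) auto
    also have "\<dots> \<le> \<bar>M\<bar> * (\<epsilon> / (\<bar>M\<bar> + 1))" using z'(1) by (intro mult_left_mono) auto
    also have "\<dots> \<le> \<epsilon>" using e by (simp add: divide_simps)
    finally show ?thesis by simp
  qed
  hence "cmod (gsum G (\<rho> z)) \<le> 0" by (rule field_le_epsilon)
  thus ?thesis by simp
qed

theorem mainTheorem7:
  fixes cs :: "complex \<Rightarrow> 'a::{real_normed_algebra,banach} \<Rightarrow> 'a"
    and \<phi> :: "'a \<Rightarrow> complex"
  assumes "complex_scal cs"
    and "has_left_approx_identity TYPE('a)"
    and "\<phi> \<in> character_space cs"
  shows "\<not> approx_biprojective (tri_scal cs) (tri_mult :: 'a \<times> 'a \<times> 'a \<Rightarrow> _) tri_norm"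
proof
  note cs = assms(1) and ph = assms(3)
  note P = char_props[OF ph]
  assume "approx_biprojective (tri_scal cs) (tri_mult :: 'a \<times> 'a \<times> 'a \<Rightarrow> _) tri_norm"
  then obtain F :: "(('a \<times> 'a \<times> 'a) \<Rightarrow> nat \<Rightarrow> ('a \<times> 'a \<times> 'a) \<times> ('a \<times> 'a \<times> 'a)) filter"
    where F: "F \<noteq> bot" "eventually (bimodule_morphism (tri_scal cs) tri_mult tri_norm) F"
      and lim: "\<And>b. ((\<lambda>\<rho>. tri_norm (tensor_pi tri_mult tri_norm (\<rho> b) - b)) \<longlongrightarrow> 0) F"
    unfolding approx_biprojective_def by blast
  obtain x0 where x0: "\<phi> x0 \<noteq> 0" using ph unfolding character_space_def by blast
  define y where "y = cs (inverse (\<phi> x0)) x0"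
  have y1: "\<phi> y = 1" using x0 P(2) unfolding y_def by simp
  obtain FE :: "'a filter" where FE: "FE \<noteq> bot" "\<And>a. ((\<lambda>e. e * a) \<longlongrightarrow> a) FE"
    using assms(2) unfolding has_left_approx_identity_def by blast
  have appr: "\<exists>e. norm (e * y - y) < \<epsilon>" if "\<epsilon> > 0" for \<epsilon>
  proof -
    have "eventually (\<lambda>e. dist (e * y) y < \<epsilon>) FE" using tendstoD[OF FE(2)[of y] that] .
    then obtain e where "dist (e * y) y < \<epsilon>" using FE(1) eventually_happens' by blast
    thus ?thesis by (auto simp: dist_norm)
  qed
  define z :: "'a \<times> 'a \<times> 'a" where "z = (0, y, 0)"
  have "eventually (\<lambda>\<rho>. tri_norm (tensor_pi tri_mult tri_norm (\<rho> z) - z) < 1) F"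
    by (rule order_tendstoD(2)[OF lim]) simp
  with F(2) have "eventually (\<lambda>\<rho>. bimodule_morphism (tri_scal cs) tri_mult tri_norm \<rho> \<and>
     tri_norm (tensor_pi tri_mult tri_norm (\<rho> z) - z) < 1) F" by (rule eventually_conj)
  then obtain \<rho> where rho: "bimodule_morphism (tri_scal cs) (tri_mult :: 'a \<times> 'a \<times> 'a \<Rightarrow> _) tri_norm \<rho>"
    and close: "tri_norm (tensor_pi tri_mult tri_norm (\<rho> z) - z) < 1"
    using F(1) eventually_happens' by blast
  have rep: "tensor_rep tri_norm (\<rho> b)" for b using rho unfolding bimodule_morphism_def by blast
  have lm: "tensor_eq (tri_scal cs) tri_norm (\<rho> (tri_mult a b)) (tensor_lmult tri_mult a (\<rho> b))" for a b
    using rho unfolding bimodule_morphism_def by blast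
  have rm: "tensor_eq (tri_scal cs) tri_norm (\<rho> (tri_mult b a)) (tensor_rmult tri_mult (\<rho> b) a)" for a b
    using rho unfolding bimodule_morphism_def by blast
  have tn: "tri_norm (z - (0, e * y, 0)) = norm (e * y - y)" for e
    by (simp add: z_def tri_norm_def norm_minus_commute)
  have g1: "gsum (Gone \<phi>) (\<rho> z) = 0"
  proof (rule gsum_zero_approx[OF cs bbf_Gs(1)[OF cs ph] rho])
    fix \<epsilon> :: real assume "\<epsilon> > 0"
    then obtain e where e: "norm (e * y - y) < \<epsilon>" using appr by blast
    have zz: "tri_mult (0, e, 0) (0, 0, y) = (0, e * y, 0)" by (simp add: tri_mult_def)
    have A: "gsum (Gone \<phi>) (\<rho> (tri_mult (0, e, 0) (0, 0, y))) = gsum (Gone \<phi>) (tensor_lmult tri_mult (0, e, 0) (\<rho> (0, 0, y)))"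
      using lm bbf_Gs(1)[OF cs ph] unfolding tensor_eq_def gsum_def by blast
    have f0: "fst (tri_mult (0, e, 0) t) = 0" for t :: "'a \<times> 'a \<times> 'a" by (cases t) (simp add: tri_mult_def)
    have B: "gsum (Gone \<phi>) (tensor_lmult tri_mult (0, e, 0) (\<rho> (0, 0, y))) = 0" unfolding gsum_def tensor_lmult_def
      by (simp add: Gone_def f0 P)
    show "\<exists>z'. tri_norm (z - z') < \<epsilon> \<and> gsum (Gone \<phi>) (\<rho> z') = 0"
      using e tn zz A B by metis
  qed
  have g2: "gsum (Gtwo \<phi>) (\<rho> z) = 0"
  proof (rule gsum_zero_approx[OF cs bbf_Gs(2)[OF cs ph] rho])
    fix \<epsilon> :: real assume "\<epsilon> > 0"
    then obtain e where e: "norm (e * y - y) < \<epsilon>" using appr by blast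
    have zz: "tri_mult (e, 0, 0) (0, y, 0) = (0, e * y, 0)" by (simp add: tri_mult_def)
    have A: "gsum (Gtwo \<phi>) (\<rho> (tri_mult (e, 0, 0) (0, y, 0))) = gsum (Gtwo \<phi>) (tensor_rmult tri_mult (\<rho> (e, 0, 0)) (0, y, 0))"
      using rm bbf_Gs(2)[OF cs ph] unfolding tensor_eq_def gsum_def by blast
    have f0: "snd (snd (tri_mult t (0, y, 0))) = 0" for t :: "'a \<times> 'a \<times> 'a" by (cases t) (simp add: tri_mult_def)
    have B: "gsum (Gtwo \<phi>) (tensor_rmult tri_mult (\<rho> (e, 0, 0)) (0, y, 0)) = 0" unfolding gsum_def tensor_rmult_def
      by (simp add: Gtwo_def f0 P)
    show "\<exists>z'. tri_norm (z - z') < \<epsilon> \<and> gsum (Gtwo \<phi>) (\<rho> z') = 0"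
      using e tn zz A B by metis
  qed
  define Z where "Z = tensor_pi tri_mult tri_norm (\<rho> z)"
  have fZ: "\<phi> (fst (snd Z)) = 0" unfolding Z_def using pi_fx[OF cs ph rep[of z]] g1 g2 by simp
  have "cmod (\<phi> (fst (snd Z)) - \<phi> (fst (snd z))) \<le> norm (fst (snd Z) - fst (snd z))"
    using char_bound[OF cs ph, of "fst (snd Z) - fst (snd z)"] P(5) by simp
  also have "\<dots> \<le> tri_norm (Z - z)" using tri_norm_comp(2)[of "Z - z"] by simp
  also have "\<dots> < 1" using close unfolding Z_def .
  finally show False using fZ y1 by (simp add: z_def)
qed


end
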